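(* Let $k\ge1$ and $\varepsilon>0$. Suppose $\mathcal{A}$ is a quantum algorithm making $T$ queries to an unknown $n$-qubit unitary (and/or its inverse) which is a $(k,\sqrt{\varepsilon/2})$-quantum junta tester, i.e. for every $U\in\mathcal{U}_N$ it outputs, with probability at least $9/10$, "Yes" if $U$ is a quantum $k$-junta and "No" if $U$ is $\sqrt{\varepsilon/2}$-far from every quantum $k$-junta. Then $\mathcal{A}$, run with the oracle $U_f=\mathrm{diag}\big((-1)^{f(x)}\big)_{x\in\{0,1\}^n}$, is a $T$-query $(k,\varepsilon)$-classical junta tester: for every Boolean function $f:\{0,1\}^n\to\{0,1\}$ it outputs, with probability at least $9/10$, "Yes" if $f$ is a $k$-junta and "No" if $f$ is $\varepsilon$-far from every $k$-junta.
   Context: $N=2^n$, $\mathcal{U}_N$ is the set of $N\times N$ unitaries. A unitary $U\in\mathcal{U}_N$ is a quantum $k$-junta if $U=V_S\otimes I_{\overline{S}}$ for some $S\subseteq[n]$ with $|S|=k$ and some $V_S\in\mathcal{U}_{2^k}$ acting on the qubits in $S$. For $A,B\in\mathbb{C}^{N\times N}$, $\mathrm{dist}(A,B):=\min_{\theta\in[0,2\pi)}\frac{1}{\sqrt{2N}}\|e^{i\theta}A-B\|$ with $\|\cdot\|$ the Frobenius norm; $U$ is $\delta$-far from every quantum $k$-junta if $\mathrm{dist}(U,V)\ge\delta$ for all quantum $k$-juntas $V$. A Boolean function $f:\{0,1\}^n\to\{0,1\}$ is a $k$-junta if $f(x)=g(x_{i_1},\dots,x_{i_k})$ for some $g:\{0,1\}^k\to\{0,1\}$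 and fixed indices $i_1,\dots,i_k$; for Boolean functions $\mathrm{dist}(f,g):=\Pr_{x}[f(x)\neq g(x)]$ with $x$ uniform on $\{0,1\}^n$, and $f$ is $\varepsilon$-far from every $k$-junta if $\mathrm{dist}(f,g)\ge\varepsilon$ for every $k$-junta $g$. $U_f$ is the diagonal $N\times N$ matrix with diagonal entries $(-1)^{f(x)}$. *)

theory Defs
  imports Complex_Main
begin

text \<open>Computational basis states of qubits indexed by a set S: bit strings x with
  x i = False outside S. The n-qubit basis {0,1}^n is basis_on {..<n}.\<close>
definition basis_on :: "nat set \<Rightarrow> (nat \<Rightarrow> bool) set" where
  "basis_on S = {x. \<forall>i. i \<notin> S \<longrightarrow> \<not> x i}"

abbreviation bstates :: "nat \<Rightarrow> (nat \<Rightarrow> bool) set" where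
  "bstates n \<equiv> basis_on {..<n}"

definition restr :: "nat set \<Rightarrow> (nat \<Rightarrow> bool) \<Rightarrow> (nat \<Rightarrow> bool)" where
  "restr S x = (\<lambda>i. if i \<in> S then x i else False)"

type_synonym qmat = "(nat \<Rightarrow> bool) \<Rightarrow> (nat \<Rightarrow> bool) \<Rightarrow> complex"

definition unitary_on :: "(nat \<Rightarrow> bool) set \<Rightarrow> qmat \<Rightarrow> bool" where
  "unitary_on B U \<longleftrightarrow>
     (\<forall>x\<in>B. \<forall>y\<in>B. (\<Sum>z\<in>B. cnj (U z x) * U z y) = (if x = y then 1 else 0))"

text \<open>Quantum k-junta: U = V_S \<otimes> I on the complement, with |S| = k.\<close>
definition quantum_junta :: "nat \<Rightarrow> nat \<Rightarrow> qmat \<Rightarrow> bool" where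
  "quantum_junta n k U \<longleftrightarrow> unitary_on (bstates n) U \<and>
     (\<exists>S V. S \<subseteq> {..<n} \<and> card S = k \<and> unitary_on (basis_on S) V \<and>
        (\<forall>x\<in>bstates n. \<forall>y\<in>bstates n.
           U x y = V (restr S x) (restr S y) *
                   (if restr ({..<n} - S) x = restr ({..<n} - S) y then 1 else 0)))"

definition frob_norm :: "nat \<Rightarrow> qmat \<Rightarrow> real" where
  "frob_norm n A = sqrt (\<Sum>x\<in>bstates n. \<Sum>y\<in>bstates n. (cmod (A x y))\<^sup>2)"

definition qdist :: "nat \<Rightarrow> qmat \<Rightarrow> qmat \<Rightarrow> real" where
  "qdist n A B = (INF \<theta>\<in>{0..<2*pi}.
      frob_norm n (\<lambda>x y. exp (\<i> * of_real \<theta>) * A x y - B x y) / sqrt (2 * 2 ^ n))"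

definition far_from_qjuntas :: "nat \<Rightarrow> nat \<Rightarrow> real \<Rightarrow> qmat \<Rightarrow> bool" where
  "far_from_qjuntas n k \<delta> U \<longleftrightarrow> (\<forall>V. quantum_junta n k V \<longrightarrow> qdist n U V \<ge> \<delta>)"

definition classical_junta :: "nat \<Rightarrow> nat \<Rightarrow> ((nat \<Rightarrow> bool) \<Rightarrow> bool) \<Rightarrow> bool" where
  "classical_junta n k f \<longleftrightarrow>
     (\<exists>is (g :: bool list \<Rightarrow> bool). length is = k \<and> set is \<subseteq> {..<n} \<and>
        (\<forall>x\<in>bstates n. f x = g (map x is)))"

definition bdist :: "nat \<Rightarrow> ((nat \<Rightarrow> bool) \<Rightarrow> bool) \<Rightarrow> ((nat \<Rightarrow> bool) \<Rightarrow> bool) \<Rightarrow> real" where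
  "bdist n f g = real (card {x\<in>bstates n. f x \<noteq> g x}) / 2 ^ n"

definition far_from_cjuntas :: "nat \<Rightarrow> nat \<Rightarrow> real \<Rightarrow> ((nat \<Rightarrow> bool) \<Rightarrow> bool) \<Rightarrow> bool" where
  "far_from_cjuntas n k \<epsilon> f \<longleftrightarrow> (\<forall>g. classical_junta n k g \<longrightarrow> bdist n f g \<ge> \<epsilon>)"

definition phase_oracle :: "((nat \<Rightarrow> bool) \<Rightarrow> bool) \<Rightarrow> qmat" where
  "phase_oracle f = (\<lambda>x y. if x = y then (if f x then -1 else 1) else 0)"

end

theory Submission
  imports Defs
begin

lemma basis_on_bij: "bij_betw (\<lambda>A i. i \<in> A) (Pow S) (basis_on S)"
proof (rule bij_betwI'[where f="\<lambda>A i. i \<in> A"])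
  fix A B assume "A \<in> Pow S" "B \<in> Pow S"
  show "((\<lambda>i. i \<in> A) = (\<lambda>i. i \<in> B)) = (A = B)" by (metis Collect_mem_eq)
next
  fix A assume "A \<in> Pow S" then show "(\<lambda>i. i \<in> A) \<in> basis_on S" by (auto simp: basis_on_def)
next
  fix x assume "x \<in> basis_on S"
  then have "{i. x i} \<in> Pow S" "x = (\<lambda>i. i \<in> {i. x i})" by (auto simp: basis_on_def)
  then show "\<exists>A\<in>Pow S. x = (\<lambda>i. i \<in> A)" by blast
qed

lemma finite_basis_on: "finite S \<Longrightarrow> finite (basis_on S)"
  using bij_betw_finite[OF basis_on_bij] by auto

lemma card_basis_on: "finite S \<Longrightarrow> card (basis_on S) = 2 ^ card S"
  using bij_betw_same_card[OF basis_on_bij] card_Pow by metis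

lemma card_bstates: "card (bstates n) = 2 ^ n"
  by (simp add: card_basis_on)

lemma diag_unitary:
  assumes "finite B"
  shows "unitary_on B (\<lambda>a b. if a = b then (if P a then -1 else 1) else 0)"
  unfolding unitary_on_def
proof (intro ballI)
  fix x y assume x: "x \<in> B" and y: "y \<in> B"
  have "(\<Sum>z\<in>B. cnj (if z = x then (if P z then -1 else 1) else 0) *
     (if z = y then (if P z then -1 else 1) else (0::complex)))
     = (\<Sum>z\<in>B. if z = x then (if x = y then 1 else 0) else 0)"
    by (rule sum.cong) auto
  also have "\<dots> = (if x = y then 1 else 0)" using x assms by simp
  finally show "(\<Sum>z\<in>B. cnj (if z = x then (if P z then -1 else 1) else 0) *
     (if z = y then (if P z then -1 else 1) else (0::complex))) = (if x = y then 1 else 0)" .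
qed

lemma cmod_diff_sq: "(cmod (a - b))\<^sup>2 = (cmod a)\<^sup>2 + (cmod b)\<^sup>2 - 2 * Re (a * cnj b)"
  unfolding cmod_power2 by (simp add: power2_eq_square algebra_simps)

lemma fiber_bound:
  fixes B :: "'a set" and r :: "'a \<Rightarrow> 'b" and s :: "'a \<Rightarrow> real" and v :: "'b \<Rightarrow> complex"
  assumes fin: "finite B" and vb: "\<forall>a\<in>r`B. cmod (v a) \<le> 1"
  defines "F \<equiv> \<lambda>a. \<Sum>x\<in>{x\<in>B. r x = a}. s x"
  shows "cmod (\<Sum>x\<in>B. complex_of_real (s x) * cnj (v (r x)))
          \<le> (\<Sum>x\<in>B. (if F (r x) < 0 then -1 else 1) * s x)"
proof -
  have "(\<Sum>x\<in>B. complex_of_real (s x) * cnj (v (r x)))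
      = (\<Sum>a\<in>r`B. \<Sum>x\<in>{x\<in>B. r x = a}. complex_of_real (s x) * cnj (v (r x)))"
    by (rule sum.image_gen[OF fin])
  also have "\<dots> = (\<Sum>a\<in>r`B. complex_of_real (F a) * cnj (v a))"
  proof (rule sum.cong[OF refl])
    fix a assume "a \<in> r ` B"
    have "(\<Sum>x\<in>{x\<in>B. r x = a}. complex_of_real (s x) * cnj (v (r x)))
        = (\<Sum>x\<in>{x\<in>B. r x = a}. complex_of_real (s x) * cnj (v a))"
      by (rule sum.cong) auto
    also have "\<dots> = complex_of_real (F a) * cnj (v a)"
      by (simp add: F_def sum_distrib_right)
    finally show "(\<Sum>x\<in>{x\<in>B. r x = a}. complex_of_real (s x) * cnj (v (r x)))
        = complex_of_real (F a) * cnj (v a)" .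
  qed
  finally have e1: "(\<Sum>x\<in>B. complex_of_real (s x) * cnj (v (r x)))
      = (\<Sum>a\<in>r`B. complex_of_real (F a) * cnj (v a))" .
  have "cmod (\<Sum>a\<in>r`B. complex_of_real (F a) * cnj (v a))
      \<le> (\<Sum>a\<in>r`B. cmod (complex_of_real (F a) * cnj (v a)))"
    by (rule norm_sum)
  also have "\<dots> \<le> (\<Sum>a\<in>r`B. \<bar>F a\<bar>)"
  proof (rule sum_mono)
    fix a assume "a \<in> r ` B"
    then have "cmod (v a) \<le> 1" using vb by blast
    then show "cmod (complex_of_real (F a) * cnj (v a)) \<le> \<bar>F a\<bar>"
      by (simp add: norm_mult mult_left_le)
  qed
  also have "\<dots> = (\<Sum>a\<in>r`B. \<Sum>x\<in>{x\<in>B. r x = a}. (if F (r x) < 0 then -1 else 1) * s x)"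
  proof (rule sum.cong[OF refl])
    fix a assume "a \<in> r ` B"
    have "(\<Sum>x\<in>{x\<in>B. r x = a}. (if F (r x) < 0 then -1 else 1) * s x)
        = (\<Sum>x\<in>{x\<in>B. r x = a}. (if F a < 0 then -1 else 1) * s x)"
      by (rule sum.cong) auto
    also have "\<dots> = \<bar>F a\<bar>"
      by (simp add: F_def sum_distrib_left[symmetric])
    finally show "\<bar>F a\<bar> = (\<Sum>x\<in>{x\<in>B. r x = a}. (if F (r x) < 0 then -1 else 1) * s x)" by simp
  qed
  also have "\<dots> = (\<Sum>x\<in>B. (if F (r x) < 0 then -1 else 1) * s x)"
    by (rule sum.image_gen[OF fin, symmetric])
  finally show ?thesis using e1 by simp
qed


lemma phase_oracle_alt:
  "phase_oracle f = (\<lambda>a b. if a = b then (if f a then -1 else 1) else 0)"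
  by (simp add: phase_oracle_def)

lemma junta_part:
  assumes "k \<le> n" and cj: "classical_junta n k f"
  shows "quantum_junta n k (phase_oracle f)"
proof -
  obtain "is" and g :: "bool list \<Rightarrow> bool" where len: "length is = k" and sub: "set is \<subseteq> {..<n}"
    and fg: "\<forall>x\<in>bstates n. f x = g (map x is)"
    using cj unfolding classical_junta_def by blast
  have ci: "card (set is) \<le> k" using len card_length by metis
  have "card ({..<n} - set is) = n - card (set is)"
    using sub by (simp add: card_Diff_subset finite_subset)
  then have "k - card (set is) \<le> card ({..<n} - set is)" using assms(1) by simp
  then obtain T where T: "T \<subseteq> {..<n} - set is" "card T = k - card (set is)"
    using obtain_subset_with_card_n by metis
  define S where "S = set is \<union> T"
  have Ssub: "S \<subseteq> {..<n}" using T sub S_def by auto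
  have finS: "finite S" using Ssub finite_subset by blast
  have cS: "card S = k"
  proof -
    have "finite T" using T(1) finite_subset by (metis finite_Diff finite_lessThan)
    moreover have "set is \<inter> T = {}" using T(1) by blast
    ultimately have "card S = card (set is) + card T" unfolding S_def
      by (simp add: card_Un_disjoint)
    then show ?thesis using T(2) ci by simp
  qed
  define V :: qmat where "V = (\<lambda>a b. if a = b then (if g (map a is) then -1 else 1) else 0)"
  have uV: "unitary_on (basis_on S) V" unfolding V_def
    by (rule diag_unitary[OF finite_basis_on[OF finS]])
  have isS: "set is \<subseteq> S" using S_def by blast
  have eq: "phase_oracle f x y = V (restr S x) (restr S y) *
                   (if restr ({..<n} - S) x = restr ({..<n} - S) y then 1 else 0)"
    if x: "x \<in> bstates n" and y: "y \<in> bstates n" for x y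
  proof (cases "x = y")
    case True
    have m: "map (restr S x) is = map x is" using isS by (auto simp: restr_def)
    show ?thesis using True fg x unfolding phase_oracle_def V_def m by simp
  next
    case False
    have "restr S x \<noteq> restr S y \<or> restr ({..<n} - S) x \<noteq> restr ({..<n} - S) y"
    proof (rule ccontr)
      assume "\<not> ?thesis"
      then have h1: "restr S x = restr S y" and h2: "restr ({..<n} - S) x = restr ({..<n} - S) y" by auto
      have "x i = y i" for i
      proof -
        consider "i \<in> S" | "i \<in> {..<n} - S" | "i \<notin> {..<n}" using Ssub by blast
        then show ?thesis
        proof cases
          case 1 then show ?thesis using fun_cong[OF h1, of i] by (simp add: restr_def)
        next
          case 2 then show ?thesis using fun_cong[OF h2, of i] by (simp add: restr_def)
        next
          case 3 then show ?thesis using x y by (simp add: basis_on_def)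
        qed
      qed
      then show False using False by blast
    qed
    then show ?thesis using False by (auto simp: phase_oracle_def V_def)
  qed
  show ?thesis unfolding quantum_junta_def
    using diag_unitary[OF finite_basis_on[of "{..<n}"], of f] phase_oracle_alt[of f]
      Ssub cS uV eq by auto
qed


lemma far_part:
  assumes eps: "\<epsilon> > 0" and far: "far_from_cjuntas n k \<epsilon> f"
  shows "far_from_qjuntas n k (sqrt (\<epsilon> / 2)) (phase_oracle f)"
  unfolding far_from_qjuntas_def
proof (intro allI impI)
  fix V assume qj: "quantum_junta n k V"
  obtain S VS where uV: "unitary_on (bstates n) V" and Ssub: "S \<subseteq> {..<n}" and cS: "card S = k"
    and uVS: "unitary_on (basis_on S) VS"
    and eqV: "\<forall>x\<in>bstates n. \<forall>y\<in>bstates n.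
           V x y = VS (restr S x) (restr S y) *
                   (if restr ({..<n} - S) x = restr ({..<n} - S) y then 1 else 0)"
    using qj unfolding quantum_junta_def by blast
  define B where "B = bstates n"
  define N where "N = (2::real) ^ n"
  have finB: "finite B" unfolding B_def by (simp add: finite_basis_on)
  have cB: "real (card B) = N" unfolding B_def N_def by (simp add: card_bstates)
  have finS: "finite S" using Ssub finite_subset by blast
  define r where "r = restr S"
  define s :: "(nat \<Rightarrow> bool) \<Rightarrow> real" where "s x = (if f x then -1 else 1)" for x
  define F where "F a = (\<Sum>x\<in>{x\<in>B. r x = a}. s x)" for a
  define G where "G a = (F a < 0)" for a
  define h where "h x = G (r x)" for x
  define D where "D = {x\<in>B. f x \<noteq> h x}"
  have cjh: "classical_junta n k h"
  proof -
    define "is" where "is = sorted_list_of_set S"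
    have sis: "set is = S" using finS is_def by simp
    have lis: "length is = k" using cS is_def by simp
    define g where "g bs = (\<exists>a\<in>basis_on S. map a is = bs \<and> G a)" for bs
    have "h x = g (map x is)" for x
    proof -
      have rx: "r x \<in> basis_on S" by (simp add: r_def restr_def basis_on_def)
      have m: "map (r x) is = map x is" using sis by (auto simp: r_def restr_def)
      have uniq: "a = r x" if "a \<in> basis_on S" "map a is = map x is" for a
      proof
        fix i show "a i = r x i"
        proof (cases "i \<in> S")
          case True then show ?thesis using that(2) sis by (auto simp: r_def restr_def map_eq_conv)
        next
          case False then show ?thesis using that(1) by (auto simp: r_def restr_def basis_on_def)
        qed
      qed
      show ?thesis unfolding g_def h_def using rx m uniq by blast
    qed
    then show ?thesis unfolding classical_junta_def using lis sis Ssub by blast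
  qed
  have cD: "real (card D) \<ge> \<epsilon> * N"
    using far cjh unfolding far_from_cjuntas_def bdist_def D_def B_def N_def
    by (auto simp: pos_le_divide_eq)
  have sumid: "(\<Sum>x\<in>B. (if F (r x) < 0 then -1 else 1) * s x) = N - 2 * real (card D)"
  proof -
    have "(\<Sum>x\<in>B. (if F (r x) < 0 then -1 else 1) * s x)
        = (\<Sum>x\<in>B. 1 - 2 * (if x \<in> D then 1 else 0))"
      by (rule sum.cong) (auto simp: s_def D_def h_def G_def)
    also have "\<dots> = real (card B) - 2 * (\<Sum>x\<in>B. (if x \<in> D then 1 else 0))"
      by (simp add: sum_subtractf sum_distrib_left)
    also have "(\<Sum>x\<in>B. (if x \<in> D then 1 else 0)) = real (card D)"
    proof -
      have "D \<subseteq> B" unfolding D_def by blast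
      then have "B \<inter> D = D" by blast
      then show ?thesis using finB by (simp add: sum.If_cases)
    qed
    finally show ?thesis using cB by simp
  qed
  have vb: "\<forall>a\<in>r`B. cmod (VS a a) \<le> 1"
  proof
    fix a assume "a \<in> r ` B"
    then have a: "a \<in> basis_on S" by (auto simp: r_def restr_def basis_on_def)
    have finBS: "finite (basis_on S)" using finS by (simp add: finite_basis_on)
    have "(\<Sum>z\<in>basis_on S. cnj (VS z a) * VS z a) = 1" using uVS a unfolding unitary_on_def by auto
    then have "complex_of_real (\<Sum>z\<in>basis_on S. (cmod (VS z a))\<^sup>2) = 1"
      by (metis (no_types, lifting) of_real_sum complex_norm_square mult.commute sum.cong)
    then have e: "(\<Sum>z\<in>basis_on S. (cmod (VS z a))\<^sup>2) = 1" using of_real_eq_1_iff by blast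
    have "(cmod (VS a a))\<^sup>2 \<le> (\<Sum>z\<in>basis_on S. (cmod (VS z a))\<^sup>2)"
      by (rule member_le_sum[OF a _ finBS]) simp
    then have "(cmod (VS a a))\<^sup>2 \<le> 1\<^sup>2" using e by simp
    from power2_le_imp_le[OF this] show "cmod (VS a a) \<le> 1" by simp
  qed
  define Z where "Z = (\<Sum>x\<in>B. complex_of_real (s x) * cnj (VS (r x) (r x)))"
  have cZ: "cmod Z \<le> N - 2 * real (card D)"
    using fiber_bound[OF finB vb, of s] sumid unfolding Z_def F_def by simp
  have Vd: "V x x = VS (r x) (r x)" if "x \<in> B" for x
    using eqV that unfolding B_def r_def by simp
  have Usx: "phase_oracle f x y = (if x = y then complex_of_real (s x) else 0)" for x y
    by (simp add: phase_oracle_def s_def)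
  show "sqrt (\<epsilon> / 2) \<le> qdist n (phase_oracle f) V"
    unfolding qdist_def
  proof (rule cINF_greatest)
    show "{0..<2 * pi} \<noteq> {}" using pi_gt_zero by simp
  next
    fix \<theta> :: real
    define c where "c = exp (\<i> * of_real \<theta>)"
    have c1: "cmod c = 1" unfolding c_def by simp
    define W where "W x y = c * phase_oracle f x y - V x y" for x y
    have T1: "(\<Sum>x\<in>B. \<Sum>y\<in>B. (cmod (c * phase_oracle f x y))\<^sup>2) = N"
    proof -
      have "(\<Sum>y\<in>B. (cmod (c * phase_oracle f x y))\<^sup>2) = 1" if "x \<in> B" for x
      proof -
        have "(\<Sum>y\<in>B. (cmod (c * phase_oracle f x y))\<^sup>2) = (\<Sum>y\<in>B. if x = y then 1 else 0)"
          by (rule sum.cong) (auto simp: Usx norm_mult c1 s_def)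
        then show ?thesis using that finB by simp
      qed
      then have "(\<Sum>x\<in>B. \<Sum>y\<in>B. (cmod (c * phase_oracle f x y))\<^sup>2) = (\<Sum>x\<in>B. 1)"
        by (rule sum.cong[OF refl])
      then show ?thesis using cB by simp
    qed
    have T2: "(\<Sum>x\<in>B. \<Sum>y\<in>B. (cmod (V x y))\<^sup>2) = N"
    proof -
      have "(\<Sum>x\<in>B. (cmod (V x y))\<^sup>2) = 1" if "y \<in> B" for y
      proof -
        have "(\<Sum>x\<in>B. cnj (V x y) * V x y) = 1" using uV that unfolding unitary_on_def B_def by auto
        then have "complex_of_real (\<Sum>x\<in>B. (cmod (V x y))\<^sup>2) = 1"
          by (metis (no_types, lifting) of_real_sum complex_norm_square mult.commute sum.cong)
        then show ?thesis using of_real_eq_1_iff by blast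
      qed
      then have "(\<Sum>y\<in>B. \<Sum>x\<in>B. (cmod (V x y))\<^sup>2) = (\<Sum>y\<in>B. 1)"
        by (rule sum.cong[OF refl])
      then show ?thesis using cB sum.swap[of "\<lambda>x y. (cmod (V x y))\<^sup>2" B B] by simp
    qed
    have T3: "(\<Sum>x\<in>B. \<Sum>y\<in>B. Re (c * phase_oracle f x y * cnj (V x y))) = Re (c * Z)"
    proof -
      have "(\<Sum>y\<in>B. Re (c * phase_oracle f x y * cnj (V x y))) = Re (c * (complex_of_real (s x) * cnj (VS (r x) (r x))))"
        if "x \<in> B" for x
      proof -
        have "(\<Sum>y\<in>B. Re (c * phase_oracle f x y * cnj (V x y)))
           = (\<Sum>y\<in>B. if x = y then Re (c * (complex_of_real (s x) * cnj (V x x))) else 0)"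
          by (rule sum.cong) (auto simp: Usx)
        then show ?thesis using that finB Vd by simp
      qed
      then have "(\<Sum>x\<in>B. \<Sum>y\<in>B. Re (c * phase_oracle f x y * cnj (V x y)))
          = (\<Sum>x\<in>B. Re (c * (complex_of_real (s x) * cnj (VS (r x) (r x)))))"
        by (rule sum.cong[OF refl])
      then show ?thesis unfolding Z_def by (simp add: sum_distrib_left)
    qed
    have "(\<Sum>x\<in>B. \<Sum>y\<in>B. (cmod (W x y))\<^sup>2)
        = (\<Sum>x\<in>B. \<Sum>y\<in>B. (cmod (c * phase_oracle f x y))\<^sup>2 + (cmod (V x y))\<^sup>2
               - 2 * Re (c * phase_oracle f x y * cnj (V x y)))"
      unfolding W_def cmod_diff_sq by simp
    also have "\<dots> = (\<Sum>x\<in>B. \<Sum>y\<in>B. (cmod (c * phase_oracle f x y))\<^sup>2)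
         + (\<Sum>x\<in>B. \<Sum>y\<in>B. (cmod (V x y))\<^sup>2)
         - 2 * (\<Sum>x\<in>B. \<Sum>y\<in>B. Re (c * phase_oracle f x y * cnj (V x y)))"
      by (simp add: sum.distrib sum_subtractf sum_distrib_left)
    also have "\<dots> = 2 * N - 2 * Re (c * Z)" using T1 T2 T3 by simp
    finally have fs: "(\<Sum>x\<in>B. \<Sum>y\<in>B. (cmod (W x y))\<^sup>2) = 2 * N - 2 * Re (c * Z)" .
    have "Re (c * Z) \<le> cmod (c * Z)" by (rule complex_Re_le_cmod)
    also have "\<dots> = cmod Z" by (simp add: norm_mult c1)
    finally have "Re (c * Z) \<le> N - 2 * real (card D)" using cZ by simp
    then have big: "(\<Sum>x\<in>B. \<Sum>y\<in>B. (cmod (W x y))\<^sup>2) \<ge> 4 * \<epsilon> * N" using fs cD by simp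
    have Npos: "N > 0" unfolding N_def by simp
    have "sqrt (\<epsilon> / 2) * sqrt (2 * N) = sqrt (\<epsilon> * N)"
      by (simp add: real_sqrt_mult[symmetric])
    also have "\<dots> \<le> sqrt (\<Sum>x\<in>B. \<Sum>y\<in>B. (cmod (W x y))\<^sup>2)"
    proof (intro real_sqrt_le_mono)
      have "\<epsilon> * N \<le> 4 * \<epsilon> * N" using mult_pos_pos[OF eps Npos] by (simp add: mult.commute)
      then show "\<epsilon> * N \<le> (\<Sum>x\<in>B. \<Sum>y\<in>B. (cmod (W x y))\<^sup>2)" using big by linarith
    qed
    also have "\<dots> = frob_norm n W" unfolding frob_norm_def B_def ..
    finally have "sqrt (\<epsilon> / 2) \<le> frob_norm n W / sqrt (2 * N)"
      using Npos by (simp add: pos_le_divide_eq)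
    then show "sqrt (\<epsilon> / 2) \<le> frob_norm n (\<lambda>x y. exp (\<i> * of_real \<theta>) * phase_oracle f x y - V x y) / sqrt (2 * 2 ^ n)"
      unfolding W_def c_def N_def by simp
  qed
qed

theorem mainTheorem2:
  fixes n k :: nat and \<epsilon> :: real
    and acc :: "qmat \<Rightarrow> real" \<comment> \<open>probability that the algorithm outputs Yes on oracle U\<close>
  assumes "k \<ge> 1" and "k \<le> n" and "\<epsilon> > 0"
    and "\<And>U. 0 \<le> acc U \<and> acc U \<le> 1"
    and tester: "\<And>U. unitary_on (bstates n) U \<Longrightarrow>
           (quantum_junta n k U \<longrightarrow> acc U \<ge> 9/10) \<and>
           (far_from_qjuntas n k (sqrt (\<epsilon> / 2)) U \<longrightarrow> 1 - acc U \<ge> 9/10)"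
  shows "\<forall>f. (classical_junta n k f \<longrightarrow> acc (phase_oracle f) \<ge> 9/10) \<and>
             (far_from_cjuntas n k \<epsilon> f \<longrightarrow> 1 - acc (phase_oracle f) \<ge> 9/10)"
proof (intro allI conjI impI)
  fix f
  have u: "unitary_on (bstates n) (phase_oracle f)"
    using diag_unitary[OF finite_basis_on[of "{..<n}"], of f] phase_oracle_alt[of f] by simp
  show "classical_junta n k f \<Longrightarrow> acc (phase_oracle f) \<ge> 9/10"
    using tester[OF u] junta_part[OF assms(2)] by blast
  show "far_from_cjuntas n k \<epsilon> f \<Longrightarrow> 1 - acc (phase_oracle f) \<ge> 9/10"
    using tester[OF u] far_part[OF assms(3)] by blast
qed

end
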